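(* Let $N\ge1$ and let $\mathcal A$ be an $(N,1,\mathbb L)$-$N$-CO-SF; let $\mathbb A$ be the set of its $N$ sequences. Partition $\mathbb A$ into disjoint nonempty subsets $\mathbb A^{(q)}$, $q\in Q$, such that within each subset all sequences have a common length $l_qN$ (with $l_q$ a positive integer) and a common energy. Index each subset arbitrarily as $\mathbb A^{(q)}=(\mathbf a^{(q)}_0,\dots,\mathbf a^{(q)}_{k_q-1})$ with $k_q=|\mathbb A^{(q)}|$. For each $q$, let $(\mathbf v^{(q),0},\dots,\mathbf v^{(q),k_q-1})$ be an arbitrary $(k_q,1,\mathbb L^{(q)})$-$k_q$-CO-SF, where $\mathbf v^{(q),m}$ has length $r_{q,m}k_q$ for a positive integer $r_{q,m}$. For $q\in Q$ and $0\le m<k_q$ define $$\mathbf s^{(q,m)}=\mathbf v^{(q),m}\odot\mathbb A^{(q)}=\big(v^{(q),m}_i\,\mathbf a^{(q)}_{[i]_{k_q}}\big)_{i=0}^{r_{q,m}k_q-1},$$ a sequence of length $r_{q,m}k_q\,l_qN$. Then the family of the $N$ sequences $\{\mathbf s^{(q,m)}\}_{q\in Q,\,0\le m<k_q}$ is an $(N,1,\mathbb L')$-$N$-CO-SF, where $\mathbb L'$ is the set of distinct values among $\{r_{q,m}k_ql_qN\}$.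
   Context: All sequences are finite complex sequences. A sequence $\mathbf s=(s_0,\dots,s_{L-1})$ of length $L$ is identified with the function $s:\mathbb Z\to\mathbb C$ given by $s(n)=s_n$ for $0\le n<L$ and $s(n)=0$ otherwise. For sequences $\mathbf s,\mathbf s'$ of lengths $L,L'$ (possibly different), the aperiodic correlation is $R_{\mathbf s,\mathbf s'}(\tau)=\sum_{l=0}^{L-1}s(l)\,\overline{s'(l+\tau)}$ for $\tau\in\mathbb Z$. The energy of $\mathbf s$ is $E_{\mathbf s}=R_{\mathbf s,\mathbf s}(0)$. An $(M,1,\mathbb L)$-$N$-shift cross-orthogonal sequence family ($N$-CO-SF) is an indexed family $(\mathbf s^0,\dots,\mathbf s^{M-1})$ of complex sequences, where $\mathbf s^m$ has length $L^{(m)}$ divisible by $N$, and $\mathbb L$ is the set of distinct values among $L^{(0)},\dots,L^{(M-1)}$, such that for all $0\le m,m'<M$ and all $k\in\mathbb Z$, $R_{\mathbf s^m,\mathbf s^{m'}}(kN)=E_{\mathbf s^m}\,\delta(m-m')\,\delta(k)$, where $\delta$ is the Kronecker delta. Connection operator: for a vector $\mathbf v=(v_0,\dots,v_{K'-1})$ and an indexed set $\mathbb A=(\mathbf a_0,\dots,\mathbf a_{M-1})$ of $M$ sequences of common length $L$, with $K=\mathrm{lcm}(M,K')$, $\mathbf v\odot\mathbb A$ is the length-$KL$ concatenation $\big(v_{[k]_{K'}}\mathbf a_{[k]_M}\big)_{k=0}^{K-1}$, where $[a]_b$ is the remainder of $a$ modulo $b$. *)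

theory Defs
  imports Complex_Main
begin

definition seq_val :: "complex list \<Rightarrow> int \<Rightarrow> complex" where
  "seq_val s n = (if 0 \<le> n \<and> n < int (length s) then s ! nat n else 0)"

definition acorr :: "complex list \<Rightarrow> complex list \<Rightarrow> int \<Rightarrow> complex" where
  "acorr s s' \<tau> = (\<Sum>l<length s. seq_val s (int l) * cnj (seq_val s' (int l + \<tau>)))"

definition energy :: "complex list \<Rightarrow> complex" where
  "energy s = acorr s s 0"

definition co_sf :: "nat \<Rightarrow> nat \<Rightarrow> nat set \<Rightarrow> (nat \<Rightarrow> complex list) \<Rightarrow> bool" where
  "co_sf M N LL s \<longleftrightarrow>
     (\<forall>m<M. N dvd length (s m)) \<and>
     LL = {length (s m) | m. m < M} \<and>
     (\<forall>m<M. \<forall>m'<M. \<forall>k::int.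
        acorr (s m) (s m') (k * int N) =
          (if m = m' \<and> k = 0 then energy (s m) else 0))"

definition connect :: "complex list \<Rightarrow> complex list list \<Rightarrow> complex list" where
  "connect v As =
     concat (map (\<lambda>k. map (\<lambda>x. v ! (k mod length v) * x) (As ! (k mod length As)))
                 [0..<lcm (length As) (length v)])"

end

theory Submission
  imports Defs "HOL-Library.Groups_Big_Fun"
begin

lemma seq_val_zero: "\<not>(0 \<le> n \<and> n < int (length xs)) \<Longrightarrow> seq_val xs n = 0"
  unfolding seq_val_def by auto

lemma seq_val_append:
  "seq_val (xs @ ys) n = seq_val xs n + seq_val ys (n - int (length xs))"
  unfolding seq_val_def by (auto simp: nth_append nat_diff_distrib)

lemma seq_val_map_mult: "seq_val (map (\<lambda>x. c * x) xs) n = c * seq_val xs n"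
  unfolding seq_val_def by auto

lemma concat_blocks:
  assumes "\<forall>i<R. length (F i) = L"
  shows "length (concat (map F [0..<R])) = R*L \<and>
    (\<forall>n. seq_val (concat (map F [0..<R])) n = (\<Sum>i<R. seq_val (F i) (n - int i * int L)))"
  using assms
proof (induction R)
  case 0
  then show ?case by (auto simp add: seq_val_def)
next
  case (Suc R)
  then show ?case by (simp add: seq_val_append algebra_simps)
qed

lemma Sum_any_shift: "Sum_any (\<lambda>n::int. g (n + c)) = Sum_any g"
proof -
  have "bij (\<lambda>n::int. n + c)"
    by (rule bij_betw_byWitness[where f'="\<lambda>n. n - c"]) auto
  then show ?thesis by (rule Sum_any.reindex_cong[symmetric]) (simp add: o_def)
qed

lemma supp_seq_val: "finite {n. seq_val x (n - a) * y n \<noteq> 0}"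
proof (rule finite_subset)
  show "{n. seq_val x (n - a) * y n \<noteq> 0} \<subseteq> {a..<a + int (length x)}"
    by (auto simp: seq_val_def split: if_splits)
qed simp

lemma acorr_Sum_any:
  "acorr s s' \<tau> = Sum_any (\<lambda>n. seq_val s n * cnj (seq_val s' (n + \<tau>)))"
proof -
  have "Sum_any (\<lambda>n. seq_val s n * cnj (seq_val s' (n + \<tau>)))
      = sum (\<lambda>n. seq_val s n * cnj (seq_val s' (n + \<tau>))) (int ` {..<length s})"
  proof (rule Sum_any.expand_superset)
    show "{a. seq_val s a * cnj (seq_val s' (a + \<tau>)) \<noteq> 0} \<subseteq> int ` {..<length s}"
    proof
      fix x assume "x \<in> {a. seq_val s a * cnj (seq_val s' (a + \<tau>)) \<noteq> 0}"
      then have "0 \<le> x" "x < int (length s)" by (auto simp: seq_val_def split: if_splits)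
      then show "x \<in> int ` {..<length s}" by (auto simp: image_iff intro!: bexI[of _ "nat x"])
    qed
  qed simp
  also have "\<dots> = acorr s s' \<tau>"
    unfolding acorr_def by (subst sum.reindex) (auto simp: inj_on_def)
  finally show ?thesis by simp
qed

lemma Sum_any_sum_swap:
  assumes "finite I" "\<And>i. i \<in> I \<Longrightarrow> finite {n. g i n \<noteq> (0::'a::comm_monoid_add)}"
  shows "Sum_any (\<lambda>n. \<Sum>i\<in>I. g i n) = (\<Sum>i\<in>I. Sum_any (g i))"
proof -
  let ?S = "\<Union>i\<in>I. {n. g i n \<noteq> 0}"
  have fS: "finite ?S" using assms by auto
  have "Sum_any (\<lambda>n. \<Sum>i\<in>I. g i n) = sum (\<lambda>n. \<Sum>i\<in>I. g i n) ?S"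
    by (rule Sum_any.expand_superset[OF fS]) (auto elim: sum.not_neutral_contains_not_neutral)
  also have "\<dots> = (\<Sum>i\<in>I. sum (g i) ?S)" by (rule sum.swap)
  also have "\<dots> = (\<Sum>i\<in>I. Sum_any (g i))"
    by (rule sum.cong[OF refl], rule Sum_any.expand_superset[OF fS, symmetric]) auto
  finally show ?thesis .
qed


lemma concat_corr:
  fixes F G :: "nat \<Rightarrow> complex list" and c d :: "nat \<Rightarrow> complex"
  assumes FL: "\<forall>i<R. length (F i) = L" and GL: "\<forall>j<R'. length (G j) = L'"
  shows "acorr (concat (map (\<lambda>i. map (\<lambda>x. c i * x) (F i)) [0..<R]))
               (concat (map (\<lambda>j. map (\<lambda>x. d j * x) (G j)) [0..<R'])) \<tau>
       = (\<Sum>i<R. \<Sum>j<R'. c i * cnj (d j) * acorr (F i) (G j) (\<tau> + int i * int L - int j * int L'))"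
proof -
  let ?s = "concat (map (\<lambda>i. map (\<lambda>x. c i * x) (F i)) [0..<R])"
  let ?s' = "concat (map (\<lambda>j. map (\<lambda>x. d j * x) (G j)) [0..<R'])"
  have sv: "seq_val ?s n = (\<Sum>i<R. c i * seq_val (F i) (n - int i * int L))" for n
    using concat_blocks[of R "\<lambda>i. map (\<lambda>x. c i * x) (F i)" L] FL
    by (simp add: seq_val_map_mult)
  have sv': "seq_val ?s' n = (\<Sum>j<R'. d j * seq_val (G j) (n - int j * int L'))" for n
    using concat_blocks[of R' "\<lambda>j. map (\<lambda>x. d j * x) (G j)" L'] GL
    by (simp add: seq_val_map_mult)
  let ?h = "\<lambda>i j n. seq_val (F i) (n - int i * int L) * cnj (seq_val (G j) (n + \<tau> - int j * int L'))"
  have fin: "finite {n. ?h i j n \<noteq> 0}" for i j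
    by (rule supp_seq_val)
  have fin2: "finite {n. c i * cnj (d j) * ?h i j n \<noteq> 0}" for i j
    by (rule finite_subset[OF _ fin[of i j]]) auto
  have fin3: "finite {n. (\<Sum>j<R'. c i * cnj (d j) * ?h i j n) \<noteq> 0}" for i
  proof (rule finite_subset)
    show "{n. (\<Sum>j<R'. c i * cnj (d j) * ?h i j n) \<noteq> 0} \<subseteq> (\<Union>j<R'. {n. c i * cnj (d j) * ?h i j n \<noteq> 0})"
    proof
      fix x assume "x \<in> {n. (\<Sum>j<R'. c i * cnj (d j) * ?h i j n) \<noteq> 0}"
      then obtain j where "j \<in> {..<R'}" "c i * cnj (d j) * ?h i j x \<noteq> 0"
        by (auto elim: sum.not_neutral_contains_not_neutral)
      then show "x \<in> (\<Union>j<R'. {n. c i * cnj (d j) * ?h i j n \<noteq> 0})" by blast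
    qed
  qed (use fin2 in auto)
  have "acorr ?s ?s' \<tau> = Sum_any (\<lambda>n. seq_val ?s n * cnj (seq_val ?s' (n + \<tau>)))"
    by (rule acorr_Sum_any)
  also have "\<dots> = Sum_any (\<lambda>n. \<Sum>i<R. \<Sum>j<R'. c i * cnj (d j) * ?h i j n)"
    by (rule Sum_any.cong) (simp only: sv sv' cnj_sum sum_product complex_cnj_mult, simp add: ac_simps)
  also have "\<dots> = (\<Sum>i<R. Sum_any (\<lambda>n. \<Sum>j<R'. c i * cnj (d j) * ?h i j n))"
    by (rule Sum_any_sum_swap) (use fin3 in auto)
  also have "\<dots> = (\<Sum>i<R. \<Sum>j<R'. Sum_any (\<lambda>n. c i * cnj (d j) * ?h i j n))"
    by (rule sum.cong[OF refl], rule Sum_any_sum_swap) (use fin2 in auto)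
  also have "\<dots> = (\<Sum>i<R. \<Sum>j<R'. c i * cnj (d j) * Sum_any (?h i j))"
    by (intro sum.cong refl) (simp add: Sum_any_right_distrib[OF fin] mult.assoc)
  also have "\<dots> = (\<Sum>i<R. \<Sum>j<R'. c i * cnj (d j) * acorr (F i) (G j) (\<tau> + int i * int L - int j * int L'))"
  proof (intro sum.cong refl)
    fix i j
    have "Sum_any (?h i j) = Sum_any (\<lambda>n. ?h i j (n + int i * int L))"
      by (rule Sum_any_shift[symmetric])
    also have "\<dots> = acorr (F i) (G j) (\<tau> + int i * int L - int j * int L')"
      by (simp add: acorr_Sum_any algebra_simps)
    finally show "c i * cnj (d j) * Sum_any (?h i j) = c i * cnj (d j) * acorr (F i) (G j) (\<tau> + int i * int L - int j * int L')"
      by simp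
  qed
  finally show ?thesis .
qed


lemma sum_delta_int:
  "(\<Sum>t'<n. (if int t' = x then g t' else (0::complex))) = (if 0 \<le> x \<and> x < int n then g (nat x) else 0)"
proof (cases "0 \<le> x")
  case True
  then have "(\<Sum>t'<n. (if int t' = x then g t' else (0::complex))) = (\<Sum>t'<n. (if t' = nat x then g t' else 0))"
    by (intro sum.cong refl) auto
  also have "\<dots> = (if nat x \<in> {..<n} then g (nat x) else 0)" by (rule sum.delta) simp
  finally show ?thesis using True by auto
next
  case False
  then show ?thesis by (auto intro!: sum.neutral)
qed

lemma acorr_double:
  "acorr V V' \<tau> = (\<Sum>t<length V. \<Sum>t'<length V'. V!t * cnj (V'!t') * (if int t' = int t + \<tau> then 1 else 0))"
  unfolding acorr_def
proof (intro sum.cong refl)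
  fix t assume "t \<in> {..<length V}"
  then have sv: "seq_val V (int t) = V ! t" by (simp add: seq_val_def)
  have "(\<Sum>t'<length V'. V!t * cnj (V'!t') * (if int t' = int t + \<tau> then 1 else 0))
     = V!t * (\<Sum>t'<length V'. (if int t' = int t + \<tau> then cnj (V'!t') else 0))"
    by (simp add: sum_distrib_left if_distrib cong: if_cong)
  also have "\<dots> = V!t * cnj (seq_val V' (int t + \<tau>))"
    by (simp add: sum_delta_int seq_val_def)
  finally show "seq_val V (int t) * cnj (seq_val V' (int t + \<tau>)) = (\<Sum>t'<length V'. V!t * cnj (V'!t') * (if int t' = int t + \<tau> then 1 else 0))"
    by (simp add: sv)
qed

lemma connect_eq:
  assumes "length As = k" "k > 0" "length v = r * k"
  shows "connect v As = concat (map (\<lambda>i. map (\<lambda>x. v!i * x) (As!(i mod k))) [0..<r*k])"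
proof -
  have "lcm k (r*k) = r*k" by (simp add: lcm_proj2_if_dvd)
  then show ?thesis unfolding connect_def using assms
    by (auto intro!: arg_cong[where f=concat] map_cong)
qed


lemma same_group:
  fixes V V' :: "complex list" and k l R R' :: nat and K :: int and E EV :: complex
  assumes kp: "k > 0" and lp: "l > 0" and LV: "length V = R*k" and LV': "length V' = R'*k"
    and cos: "\<And>c::int. acorr V V' (c * int k) = (if b \<and> c = 0 then EV else 0)"
  shows "(\<Sum>t<R*k. \<Sum>t'<R'*k. V!t * cnj (V'!t') *
            (if t mod k = t' mod k \<and> K + int t * int l - int t' * int l = 0 then E else 0))
         = E * (if b \<and> K = 0 then EV else 0)"
proof (cases "\<exists>c. K = c * int k * int l")
  case True
  then obtain c where Kc: "K = c * int k * int l" by blast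
  have iff: "(t mod k = t' mod k \<and> K + int t * int l - int t' * int l = 0) \<longleftrightarrow> int t' = int t + c * int k"
    for t t' :: nat
  proof
    assume "t mod k = t' mod k \<and> K + int t * int l - int t' * int l = 0"
    then have "(c * int k + int t - int t') * int l = 0" by (simp add: Kc algebra_simps)
    with lp show "int t' = int t + c * int k" by simp
  next
    assume h: "int t' = int t + c * int k"
    then have "int (t' mod k) = int (t mod k)"
      by (simp add: zmod_int)
    then have "t mod k = t' mod k" by simp
    with h show "t mod k = t' mod k \<and> K + int t * int l - int t' * int l = 0"
      by (simp add: Kc algebra_simps)
  qed
  have "(\<Sum>t<R*k. \<Sum>t'<R'*k. V!t * cnj (V'!t') *
            (if t mod k = t' mod k \<and> K + int t * int l - int t' * int l = 0 then E else 0))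
      = E * (\<Sum>t<R*k. \<Sum>t'<R'*k. V!t * cnj (V'!t') * (if int t' = int t + c * int k then 1 else 0))"
    unfolding sum_distrib_left by (intro sum.cong refl) (simp only: iff, simp)
  also have "\<dots> = E * acorr V V' (c * int k)"
    by (simp add: acorr_double LV LV')
  also have "\<dots> = E * (if b \<and> K = 0 then EV else 0)"
    using kp lp by (simp add: cos Kc)
  finally show ?thesis .
next
  case False
  have never: "\<not> (t mod k = t' mod k \<and> K + int t * int l - int t' * int l = 0)" for t t' :: nat
  proof
    assume h: "t mod k = t' mod k \<and> K + int t * int l - int t' * int l = 0"
    then have "int t mod int k = int t' mod int k" by (metis of_nat_mod)
    then have "int k dvd int t' - int t" by (metis mod_eq_dvd_iff)
    then obtain c where "int t' - int t = int k * c" by (auto elim: dvdE)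
    moreover have "K = (int t' - int t) * int l" using h by (simp add: algebra_simps)
    ultimately have "K = c * int k * int l" by simp
    with False show False by blast
  qed
  have "K \<noteq> 0" using False by (metis mult_zero_left)
  moreover have "(\<Sum>t<R*k. \<Sum>t'<R'*k. V!t * cnj (V'!t') *
            (if t mod k = t' mod k \<and> K + int t * int l - int t' * int l = 0 then E else 0)) = 0"
    by (intro sum.neutral ballI) (simp only: never if_False mult_zero_right)
  ultimately show ?thesis by simp
qed

theorem theorem3:
  fixes N :: nat
    and a :: "nat \<Rightarrow> complex list"
    and LL :: "nat set"
    and Q :: "'q set"
    and k :: "'q \<Rightarrow> nat"
    and idx :: "'q \<Rightarrow> nat \<Rightarrow> nat"
    and l :: "'q \<Rightarrow> nat"
    and v :: "'q \<Rightarrow> nat \<Rightarrow> complex list"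
    and LLq :: "'q \<Rightarrow> nat set"
    and r :: "'q \<Rightarrow> nat \<Rightarrow> nat"
    and e :: "nat \<Rightarrow> 'q \<times> nat"
  assumes N_pos: "N \<ge> 1"
    and A_cosf: "co_sf N N LL a"
    and partition: "bij_betw (\<lambda>(q, j). idx q j) (SIGMA q:Q. {..<k q}) {..<N}"
    and k_pos: "\<And>q. q \<in> Q \<Longrightarrow> k q > 0"
    and l_pos: "\<And>q. q \<in> Q \<Longrightarrow> l q > 0"
    and common_len: "\<And>q j. q \<in> Q \<Longrightarrow> j < k q \<Longrightarrow> length (a (idx q j)) = l q * N"
    and common_energy: "\<And>q j. q \<in> Q \<Longrightarrow> j < k q \<Longrightarrow> energy (a (idx q j)) = energy (a (idx q 0))"
    and V_cosf: "\<And>q. q \<in> Q \<Longrightarrow> co_sf (k q) (k q) (LLq q) (v q)"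
    and r_pos: "\<And>q m. q \<in> Q \<Longrightarrow> m < k q \<Longrightarrow> r q m > 0"
    and v_len: "\<And>q m. q \<in> Q \<Longrightarrow> m < k q \<Longrightarrow> length (v q m) = r q m * k q"
    and e_bij: "bij_betw e {..<N} (SIGMA q:Q. {..<k q})"
  shows "co_sf N N {r q m * k q * l q * N | q m. q \<in> Q \<and> m < k q}
           (\<lambda>i. case e i of (q, m) \<Rightarrow> connect (v q m) (map (\<lambda>j. a (idx q j)) [0..<k q]))"
proof -
  define C where "C q m = connect (v q m) (map (\<lambda>j. a (idx q j)) [0..<k q])" for q m
  define E where "E q = energy (a (idx q 0))" for q
  have inj_idx: "q = q' \<and> j = j'" if "q \<in> Q" "q' \<in> Q" "j < k q" "j' < k q'" "idx q j = idx q' j'" for q q' j j'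
    using bij_betw_imp_inj_on[OF partition] that unfolding inj_on_def by fastforce
  have idx_lt: "idx q j < N" if "q \<in> Q" "j < k q" for q j
    using bij_betw_imp_surj_on[OF partition] that by auto
  have Acor: "acorr (a x) (a y) (K * int N) = (if x = y \<and> K = 0 then energy (a x) else 0)"
    if "x < N" "y < N" for x y K
    using A_cosf that unfolding co_sf_def by blast
  have C_eq: "C q m = concat (map (\<lambda>t. map (\<lambda>x. v q m ! t * x) (a (idx q (t mod k q)))) [0..<r q m * k q])"
    if "q \<in> Q" "m < k q" for q m
  proof -
    have "C q m = concat (map (\<lambda>i. map (\<lambda>x. v q m!i * x) ((map (\<lambda>j. a (idx q j)) [0..<k q])!(i mod k q))) [0..<r q m*k q])"
      unfolding C_def by (rule connect_eq) (use that k_pos v_len in auto)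
    also have "\<dots> = concat (map (\<lambda>t. map (\<lambda>x. v q m ! t * x) (a (idx q (t mod k q)))) [0..<r q m * k q])"
      using k_pos[OF that(1)] by simp
    finally show ?thesis .
  qed
  have C_len: "length (C q m) = r q m * k q * l q * N" if "q \<in> Q" "m < k q" for q m
  proof -
    have "\<forall>t<r q m * k q. length (map (\<lambda>x. v q m ! t * x) (a (idx q (t mod k q)))) = l q * N"
      using common_len[OF that(1)] k_pos[OF that(1)] by simp
    from concat_blocks[OF this] show ?thesis by (simp add: C_eq[OF that])
  qed
  have gen: "acorr (C q m) (C q' m') (K * int N) =
      (\<Sum>t<r q m * k q. \<Sum>t'<r q' m' * k q'. v q m ! t * cnj (v q' m' ! t') *
         (if q = q' \<and> t mod k q = t' mod k q' \<and> K + int t * int (l q) - int t' * int (l q') = 0 then E q else 0))"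
    if "q \<in> Q" "m < k q" "q' \<in> Q" "m' < k q'" for q m q' m' K
  proof -
    have "acorr (C q m) (C q' m') (K * int N) =
      (\<Sum>t<r q m * k q. \<Sum>t'<r q' m' * k q'. v q m ! t * cnj (v q' m' ! t') *
         acorr (a (idx q (t mod k q))) (a (idx q' (t' mod k q'))) (K * int N + int t * int (l q * N) - int t' * int (l q' * N)))"
      unfolding C_eq[OF that(1,2)] C_eq[OF that(3,4)]
      by (rule concat_corr) (use common_len that k_pos in auto)
    also have "\<dots> = (\<Sum>t<r q m * k q. \<Sum>t'<r q' m' * k q'. v q m ! t * cnj (v q' m' ! t') *
         (if q = q' \<and> t mod k q = t' mod k q' \<and> K + int t * int (l q) - int t' * int (l q') = 0 then E q else 0))"
    proof (intro sum.cong refl arg_cong2[where f="(*)"])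
      fix t t'
      have tk: "t mod k q < k q" "t' mod k q' < k q'" using k_pos that by auto
      have arg: "K * int N + int t * int (l q * N) - int t' * int (l q' * N) = (K + int t * int (l q) - int t' * int (l q')) * int N"
        by (simp add: algebra_simps)
      have ieq: "(idx q (t mod k q) = idx q' (t' mod k q')) = (q = q' \<and> t mod k q = t' mod k q')"
        using inj_idx[OF that(1,3) tk] by auto
      show "acorr (a (idx q (t mod k q))) (a (idx q' (t' mod k q'))) (K * int N + int t * int (l q * N) - int t' * int (l q' * N))
        = (if q = q' \<and> t mod k q = t' mod k q' \<and> K + int t * int (l q) - int t' * int (l q') = 0 then E q else 0)"
        unfolding arg Acor[OF idx_lt[OF that(1) tk(1)] idx_lt[OF that(3) tk(2)]] ieq
        using common_energy[OF that(1) tk(1)] by (auto simp: E_def)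
    qed
    finally show ?thesis .
  qed
  have same: "acorr (C q m) (C q m') (K * int N) = E q * (if m = m' \<and> K = 0 then energy (v q m) else 0)"
    if "q \<in> Q" "m < k q" "m' < k q" for q m m' K
    unfolding gen[OF that(1,2) that(1,3)]
    using same_group[of "k q" "l q" "v q m" "r q m" "v q m'" "r q m'" "m = m'" "energy (v q m)" K "E q"]
      k_pos l_pos v_len V_cosf that unfolding co_sf_def by simp
  have energyC: "energy (C q m) = E q * energy (v q m)" if "q \<in> Q" "m < k q" for q m
    using same[OF that that(2), of 0] by (simp add: energy_def)
  have eS: "e i \<in> (SIGMA q:Q. {..<k q})" if "i < N" for i
    using bij_betw_imp_surj_on[OF e_bij] that by auto
  have Sdef: "(case e i of (q, m) \<Rightarrow> connect (v q m) (map (\<lambda>j. a (idx q j)) [0..<k q])) = (case e i of (q, m) \<Rightarrow> C q m)" for i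
    by (simp add: C_def split: prod.splits)
  show ?thesis
    unfolding co_sf_def Sdef
  proof (intro conjI allI impI)
    fix i assume "i < N"
    then obtain q m where "e i = (q, m)" "q \<in> Q" "m < k q" using eS by force
    then show "N dvd length (case e i of (q, m) \<Rightarrow> C q m)" by (simp add: C_len)
  next
    show "{r q m * k q * l q * N | q m. q \<in> Q \<and> m < k q} = {length (case e i of (q, m) \<Rightarrow> C q m) | i. i < N}"
    proof (intro equalityI subsetI)
      fix x assume "x \<in> {r q m * k q * l q * N | q m. q \<in> Q \<and> m < k q}"
      then obtain q m where qm: "q \<in> Q" "m < k q" "x = r q m * k q * l q * N" by blast
      then have "(q, m) \<in> e ` {..<N}" using bij_betw_imp_surj_on[OF e_bij] by auto
      then obtain i where "i < N" "e i = (q, m)" by auto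
      then show "x \<in> {length (case e i of (q, m) \<Rightarrow> C q m) | i. i < N}"
        using qm C_len by force
    next
      fix x assume "x \<in> {length (case e i of (q, m) \<Rightarrow> C q m) | i. i < N}"
      then obtain i where "i < N" "x = length (case e i of (q, m) \<Rightarrow> C q m)" by blast
      moreover obtain q m where "e i = (q, m)" "q \<in> Q" "m < k q" using eS[OF \<open>i < N\<close>] by force
      ultimately show "x \<in> {r q m * k q * l q * N | q m. q \<in> Q \<and> m < k q}"
        using C_len by auto
    qed
  next
    fix i i' :: nat and K :: int
    assume i: "i < N" and i': "i' < N"
    obtain q m where qm: "e i = (q, m)" "q \<in> Q" "m < k q" using eS[OF i] by force
    obtain q' m' where qm': "e i' = (q', m')" "q' \<in> Q" "m' < k q'" using eS[OF i'] by force
    have einj: "(i = i') = (q = q' \<and> m = m')"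
      using bij_betw_imp_inj_on[OF e_bij] i i' qm(1) qm'(1) unfolding inj_on_def by auto
    show "acorr (case e i of (q, m) \<Rightarrow> C q m) (case e i' of (q, m) \<Rightarrow> C q m) (K * int N) =
          (if i = i' \<and> K = 0 then energy (case e i of (q, m) \<Rightarrow> C q m) else 0)"
    proof (cases "q = q'")
      case True
      then show ?thesis
        using same[OF qm(2,3), of m' K] qm qm' einj energyC[OF qm(2,3)] by auto
    next
      case False
      then have "acorr (C q m) (C q' m') (K * int N) = 0"
        by (simp add: gen[OF qm(2,3) qm'(2,3)])
      then show ?thesis using False einj qm qm' by auto
    qed
  qed
qed

end
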